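(* Let $F$ be a preordered semifield of characteristic zero satisfying $1 \geq 0$, and suppose that $u \in F$ is polynomially universal. Then for all nonzero $x, y \in F$, the following are equivalent: (1) $f(x) \geq f(y)$ for every monotone semiring homomorphism $f : F \to \mathbb{R}_+$. (2) For every rational $\varepsilon > 0$, there is $m \in \mathbb{N}$ such that $x + \sum_{j=0}^m \varepsilon^{j+1} u^j \geq y$. (3) For every $r \in \mathbb{R}_+$ and rational $\varepsilon > 0$, there is a polynomial $p \in \mathbb{Q}_+[X]$ such that $p(r) \leq \varepsilon$ and $x + p(u) \geq y$. (4) For every $r \in \mathbb{R}_+$ and rational $\varepsilon > 0$, there is a polynomial $p \in \mathbb{Q}_+[X]$ such that $p(r) \leq 1 + \varepsilon$ and $p(u)\, x \geq y$.
   Context: A semiring is a set with two commutative monoid structures, addition (neutral element $0$) and multiplication (neutral element $1$), with multiplication distributing over addition; a semiring homomorphism preserves $+$, $\cdot$, $0$, $1$. A semifield is a semiring in which every nonzero element has a multiplicative inverse. It has characteristic zero if the unique homomorphism $\mathbb{N} \to F$ is injective; a semifield of characteristic zero is then a $\mathbb{Q}_+$-algebra, which gives meaning to $\varepsilon^{j+1} u^j$ and $p(u)$ for rational coefficients. A preordered semifield is a semifield with a preorder $\geq$ such that $x \geq y$ implies $x+z \geq y+z$ and $xz \geq yz$ for all $z$. A semiring homomorphism is monotone if it preserves the preorder ($\mathbb{R}_+$ with its usual order). An element $u \geq 1$ is polynomially universal if for every nonzero $x \in F$ there is $p \in \mathbb{N}[X]$ with $p(u)\,x \geq 1$ and $p(u)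 \geq x$. *)

theory Defs
  imports Main "HOL-Computational_Algebra.Polynomial"
begin

text \<open>Semifields are modelled as a type of class comm_semiring_1 (so 0 \<noteq> 1) together
with the explicit assumption that every nonzero element is invertible; the preorder
is the class preorder on the same type.\<close>

definition is_semifield :: "'a::comm_semiring_1 itself \<Rightarrow> bool" where
  "is_semifield _ \<longleftrightarrow> (\<forall>x::'a. x \<noteq> 0 \<longrightarrow> (\<exists>y. x * y = 1))"

definition sf_inv :: "'a::comm_semiring_1 \<Rightarrow> 'a" where
  "sf_inv x = (SOME y. x * y = 1)"

definition char_zero_sr :: "'a::comm_semiring_1 itself \<Rightarrow> bool" where
  "char_zero_sr _ \<longleftrightarrow> inj (of_nat :: nat \<Rightarrow> 'a)"

definition preordered_sr :: "'a::{comm_semiring_1,preorder} itself \<Rightarrow> bool" where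
  "preordered_sr _ \<longleftrightarrow> (\<forall>x y z::'a. y \<le> x \<longrightarrow> y + z \<le> x + z \<and> y * z \<le> x * z)"

text \<open>Action of nonnegative rationals (Q_+-algebra structure): q = a/b acts as a * b^{-1}.\<close>
definition qscale :: "rat \<Rightarrow> 'a::comm_semiring_1 \<Rightarrow> 'a" where
  "qscale q x = of_nat (nat (fst (quotient_of q))) * sf_inv (of_nat (nat (snd (quotient_of q)))) * x"

definition qpoly_eval :: "rat poly \<Rightarrow> 'a::comm_semiring_1 \<Rightarrow> 'a" where
  "qpoly_eval p u = (\<Sum>i\<le>degree p. qscale (coeff p i) (u ^ i))"

definition nonneg_qpoly :: "rat poly \<Rightarrow> bool" where
  "nonneg_qpoly p \<longleftrightarrow> (\<forall>i. coeff p i \<ge> 0)"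

definition npoly_eval :: "nat poly \<Rightarrow> 'a::comm_semiring_1 \<Rightarrow> 'a" where
  "npoly_eval p u = poly (map_poly of_nat p) u"

definition poly_universal :: "'a::{comm_semiring_1,preorder} \<Rightarrow> bool" where
  "poly_universal u \<longleftrightarrow> 1 \<le> u \<and>
     (\<forall>x. x \<noteq> 0 \<longrightarrow> (\<exists>p::nat poly. 1 \<le> npoly_eval p u * x \<and> x \<le> npoly_eval p u))"

definition mono_hom_Rplus :: "('a::{comm_semiring_1,preorder} \<Rightarrow> real) \<Rightarrow> bool" where
  "mono_hom_Rplus f \<longleftrightarrow> (\<forall>x. f x \<ge> 0) \<and> (\<forall>x y. f (x + y) = f x + f y) \<and>
     (\<forall>x y. f (x * y) = f x * f y) \<and> f 0 = 0 \<and> f 1 = 1 \<and> (\<forall>x y. x \<le> y \<longrightarrow> f x \<le> f y)"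

end

theory Submission
  imports Defs
begin


definition qe :: "rat \<Rightarrow> 'a::comm_semiring_1" where "qe q = qscale q 1"

lemma qscale_qe: "qscale q x = qe q * x"
  by (simp add: qe_def qscale_def)

context
  assumes SF: "is_semifield TYPE('a::comm_semiring_1)"
    and CZ: "char_zero_sr TYPE('a)"
begin

lemma inv_r: "(x::'a) \<noteq> 0 \<Longrightarrow> x * sf_inv x = 1"
proof -
  assume "x \<noteq> 0"
  then have "\<exists>y. x * y = 1" using SF unfolding is_semifield_def by blast
  then show ?thesis unfolding sf_inv_def by (rule someI_ex)
qed

lemma inv_unique: "(x::'a) * y = 1 \<Longrightarrow> sf_inv x = y"
proof -
  assume h: "x * y = 1"
  then have "x \<noteq> 0" by auto
  then have i: "x * sf_inv x = 1" by (rule inv_r)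
  have "sf_inv x = sf_inv x * (x * y)" using h by simp
  also have "\<dots> = (x * sf_inv x) * y" by (simp only: ac_simps)
  also have "\<dots> = y" using i by simp
  finally show ?thesis .
qed

lemma nz_mult: "(x::'a) \<noteq> 0 \<Longrightarrow> y \<noteq> 0 \<Longrightarrow> x * y \<noteq> 0"
proof
  assume "x \<noteq> 0" "y \<noteq> 0" "x * y = 0"
  have "y = (x * sf_inv x) * y" using inv_r[OF \<open>x \<noteq> 0\<close>] by simp
  also have "\<dots> = sf_inv x * (x * y)" by (simp only: ac_simps)
  also have "\<dots> = 0" using \<open>x * y = 0\<close> by simp
  finally show False using \<open>y \<noteq> 0\<close> by simp
qed

lemma of_nat_nz: "n \<noteq> 0 \<Longrightarrow> (of_nat n :: 'a) \<noteq> 0"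
  using CZ unfolding char_zero_sr_def inj_def by (metis of_nat_0)

lemma inv_nz: "(x::'a) \<noteq> 0 \<Longrightarrow> sf_inv x \<noteq> 0"
  using inv_r by force

lemma inv_1: "sf_inv (1::'a) = 1"
  by (rule inv_unique) simp

lemma inv_mult: "(x::'a) \<noteq> 0 \<Longrightarrow> y \<noteq> 0 \<Longrightarrow> sf_inv (x * y) = sf_inv x * sf_inv y"
proof -
  assume a: "x \<noteq> 0" "y \<noteq> 0"
  have e: "x * y * (sf_inv x * sf_inv y) = (x * sf_inv x) * (y * sf_inv y)" by (simp only: ac_simps)
  have "x * y * (sf_inv x * sf_inv y) = 1" unfolding e inv_r[OF a(1)] inv_r[OF a(2)] by simp
  then show ?thesis by (rule inv_unique)
qed

lemma frac_eq:
  assumes "b > 0" "b' > 0" "(of_nat a / of_nat b :: rat) = of_nat a' / of_nat b'"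
  shows "(of_nat a * sf_inv (of_nat b) :: 'a) = of_nat a' * sf_inv (of_nat b')"
proof -
  have "(of_nat (a * b') :: rat) = of_nat (a' * b)" using assms by (simp add: field_simps)
  then have n: "a * b' = a' * b" using of_nat_eq_iff by blast
  define B :: 'a where "B = of_nat b"
  define B' :: 'a where "B' = of_nat b'"
  have B: "B * sf_inv B = 1" unfolding B_def using assms of_nat_nz inv_r by simp
  have B': "B' * sf_inv B' = 1" unfolding B'_def using assms of_nat_nz inv_r by simp
  have "(of_nat a * sf_inv B :: 'a) = of_nat a * sf_inv B * (B' * sf_inv B')" using B' by simp
  also have "\<dots> = of_nat (a * b') * sf_inv B * sf_inv B'" by (simp add: B'_def ac_simps)
  also have "\<dots> = of_nat (a' * b) * sf_inv B * sf_inv B'" by (simp add: n)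
  also have "\<dots> = of_nat a' * sf_inv B' * (B * sf_inv B)" by (simp add: B_def ac_simps)
  finally show ?thesis using B by (simp add: B_def B'_def)
qed

lemma qe_repr:
  assumes "q \<ge> 0"
  obtains a b where "b > 0" "q = of_nat a / of_nat b" "(qe q :: 'a) = of_nat a * sf_inv (of_nat b)"
proof -
  obtain n d where nd: "quotient_of q = (n, d)" by (cases "quotient_of q") auto
  have d: "d > 0" using quotient_of_denom_pos[OF nd] .
  have qq: "q = of_int n / of_int d" using quotient_of_div[OF nd] .
  have "n \<ge> 0"
  proof (rule ccontr)
    assume "\<not> n \<ge> 0"
    then have "(of_int n :: rat) < 0" by simp
    then have "q < 0" using qq d by (simp add: divide_neg_pos)
    then show False using assms by simp
  qed
  show ?thesis
  proof (rule that[of "nat d" "nat n"])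
    show "nat d > 0" using d by simp
    show "q = of_nat (nat n) / of_nat (nat d)" using qq d \<open>n \<ge> 0\<close> by simp
    show "(qe q :: 'a) = of_nat (nat n) * sf_inv (of_nat (nat d))"
      by (simp add: qe_def qscale_def nd)
  qed
qed

lemma qe_frac: "b > 0 \<Longrightarrow> (qe (of_nat a / of_nat b) :: 'a) = of_nat a * sf_inv (of_nat b)"
proof -
  assume b: "b > 0"
  have "(of_nat a / of_nat b :: rat) \<ge> 0" by simp
  then obtain a' b' where "b' > 0" "(of_nat a / of_nat b :: rat) = of_nat a' / of_nat b'"
     "(qe (of_nat a / of_nat b) :: 'a) = of_nat a' * sf_inv (of_nat b')"
    by (rule qe_repr)
  then show ?thesis using frac_eq[OF b \<open>b' > 0\<close>] by metis
qed

lemma qe_nat: "(qe (of_nat n) :: 'a) = of_nat n"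
  using qe_frac[of 1 n] by (simp add: inv_1)

lemma qe_0: "(qe 0 :: 'a) = 0" using qe_nat[of 0] by simp
lemma qe_1: "(qe 1 :: 'a) = 1" using qe_nat[of 1] by simp

lemma qe_add: assumes "q \<ge> 0" "r \<ge> 0" shows "(qe (q + r) :: 'a) = qe q + qe r"
proof -
  obtain a b where ab: "b > 0" "q = of_nat a / of_nat b" "(qe q :: 'a) = of_nat a * sf_inv (of_nat b)"
    using qe_repr[OF assms(1)] by blast
  obtain c d where cd: "d > 0" "r = of_nat c / of_nat d" "(qe r :: 'a) = of_nat c * sf_inv (of_nat d)"
    using qe_repr[OF assms(2)] by blast
  have "q + r = of_nat (a * d + c * b) / of_nat (b * d)" unfolding ab(2) cd(2) using ab(1) cd(1) by (simp add: field_simps)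
  then have "(qe (q + r) :: 'a) = of_nat (a * d + c * b) * sf_inv (of_nat (b * d))"
    by (simp only: qe_frac ab(1) cd(1) mult_pos_pos)
  also have "\<dots> = of_nat (a * d + c * b) * (sf_inv (of_nat b) * sf_inv (of_nat d))"
    using inv_mult of_nat_nz ab cd by simp
  also have "\<dots> = of_nat a * sf_inv (of_nat b) * (of_nat d * sf_inv (of_nat d))
     + of_nat c * sf_inv (of_nat d) * (of_nat b * sf_inv (of_nat b))"
    by (simp add: algebra_simps)
  also have "\<dots> = qe q + qe r" using ab cd inv_r of_nat_nz by simp
  finally show ?thesis .
qed

lemma qe_mult: assumes "q \<ge> 0" "r \<ge> 0" shows "(qe (q * r) :: 'a) = qe q * qe r"
proof -
  obtain a b where ab: "b > 0" "q = of_nat a / of_nat b" "(qe q :: 'a) = of_nat a * sf_inv (of_nat b)"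
    using qe_repr[OF assms(1)] by blast
  obtain c d where cd: "d > 0" "r = of_nat c / of_nat d" "(qe r :: 'a) = of_nat c * sf_inv (of_nat d)"
    using qe_repr[OF assms(2)] by blast
  have "q * r = of_nat (a * c) / of_nat (b * d)" unfolding ab(2) cd(2) by simp
  then have "(qe (q * r) :: 'a) = of_nat (a * c) * sf_inv (of_nat (b * d))"
    by (simp only: qe_frac ab(1) cd(1) mult_pos_pos)
  also have "\<dots> = of_nat (a * c) * (sf_inv (of_nat b) * sf_inv (of_nat d))"
    using inv_mult of_nat_nz ab cd by simp
  also have "\<dots> = qe q * qe r" using ab cd by (simp add: ac_simps)
  finally show ?thesis .
qed

lemma qe_pos_nz: assumes "q > 0" shows "(qe q :: 'a) \<noteq> 0"
proof -
  obtain a b where ab: "b > 0" "q = of_nat a / of_nat b" "(qe q :: 'a) = of_nat a * sf_inv (of_nat b)"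
    using qe_repr[OF less_imp_le[OF assms]] by blast
  have "a \<noteq> 0"
  proof
    assume "a = 0" then have "q = 0" using ab(2) by simp
    then show False using assms by simp
  qed
  have "(of_nat b :: 'a) \<noteq> 0" using ab(1) of_nat_nz by simp
  then show ?thesis using ab(3) nz_mult of_nat_nz[OF \<open>a \<noteq> 0\<close>] inv_nz by metis
qed

lemma qe_sum: "(\<And>i. i \<in> A \<Longrightarrow> g i \<ge> 0) \<Longrightarrow> (qe (sum g A) :: 'a) = (\<Sum>i\<in>A. qe (g i))"
proof (induction A rule: infinite_finite_induct)
  case (infinite A) then show ?case by (simp add: qe_0)
next
  case empty then show ?case by (simp add: qe_0)
next
  case (insert i A)
  then show ?case by (simp add: qe_add sum_nonneg)
qed

lemma qe_power: "q \<ge> 0 \<Longrightarrow> (qe (q ^ n) :: 'a) = qe q ^ n"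
  by (induction n) (simp_all add: qe_1 qe_mult)

end



definition cmp :: "('a::comm_semiring_1 \<times> 'a) set \<Rightarrow> bool" where
  "cmp R \<longleftrightarrow> (\<forall>a. (a, a) \<in> R) \<and> (\<forall>a b c. (a, b) \<in> R \<longrightarrow> (b, c) \<in> R \<longrightarrow> (a, c) \<in> R)
     \<and> (\<forall>a b c. (a, b) \<in> R \<longrightarrow> (a + c, b + c) \<in> R \<and> (a * c, b * c) \<in> R)"

lemma cmp_refl: "cmp R \<Longrightarrow> (a, a) \<in> R" unfolding cmp_def by blast
lemma cmp_trans: "cmp R \<Longrightarrow> (a, b) \<in> R \<Longrightarrow> (b, c) \<in> R \<Longrightarrow> (a, c) \<in> R" unfolding cmp_def by blast
lemma cmp_addR: "cmp R \<Longrightarrow> (a, b) \<in> R \<Longrightarrow> (a + c, b + c) \<in> R" unfolding cmp_def by blast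
lemma cmp_mulR: "cmp R \<Longrightarrow> (a, b) \<in> R \<Longrightarrow> (a * c, b * c) \<in> R" unfolding cmp_def by blast
lemma cmp_addL: "cmp R \<Longrightarrow> (a, b) \<in> R \<Longrightarrow> (c + a, c + b) \<in> R"
  using cmp_addR[of R a b c] by (simp add: add.commute)
lemma cmp_mulL: "cmp R \<Longrightarrow> (a, b) \<in> R \<Longrightarrow> (c * a, c * b) \<in> R"
  using cmp_mulR[of R a b c] by (simp add: mult.commute)
lemma cmp_add: "cmp R \<Longrightarrow> (a, b) \<in> R \<Longrightarrow> (c, d) \<in> R \<Longrightarrow> (a + c, b + d) \<in> R"
  by (meson cmp_addL cmp_addR cmp_trans)
lemma cmp_mul: "cmp R \<Longrightarrow> (a, b) \<in> R \<Longrightarrow> (c, d) \<in> R \<Longrightarrow> (a * c, b * d) \<in> R"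
  by (meson cmp_mulL cmp_mulR cmp_trans)
lemma cmp_eq: "cmp R \<Longrightarrow> a = b \<Longrightarrow> (a, b) \<in> R" using cmp_refl by blast

lemma cmp_sum: "cmp R \<Longrightarrow> (\<And>i. i \<in> A \<Longrightarrow> (f i, g i) \<in> R) \<Longrightarrow> (sum f A, sum g A) \<in> R"
proof (induction A rule: infinite_finite_induct)
  case (infinite A) then show ?case by (simp add: cmp_refl)
next
  case empty then show ?case by (simp add: cmp_refl)
next
  case (insert i A) then show ?case by (simp add: cmp_add)
qed

lemma cmp_pow: "cmp R \<Longrightarrow> (a, b) \<in> R \<Longrightarrow> (a ^ n, b ^ n) \<in> R"
  by (induction n) (simp_all add: cmp_refl cmp_mul)

lemma cmp_LE: "preordered_sr TYPE('a::{comm_semiring_1,preorder}) \<Longrightarrow> cmp {(a::'a, b). a \<le> b}"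
  unfolding cmp_def preordered_sr_def by (auto intro: order_trans)

context
  fixes R :: "('a::{comm_semiring_1,preorder} \<times> 'a) set"
  assumes cR: "cmp R" and LR: "{(a, b). a \<le> b} \<subseteq> R" and ZO: "(0::'a) \<le> 1"
begin

lemma R01: "(0, 1) \<in> R" using LR ZO by blast

lemma R0: "(0, a) \<in> R" using cmp_mulR[OF cR R01, of a] by simp

lemma Radd: "(a, a + b) \<in> R" using cmp_addL[OF cR R0, of a b] by simp

lemma Rpow_exp: "(1, u) \<in> R \<Longrightarrow> i \<le> d \<Longrightarrow> (u ^ i, u ^ d) \<in> R"
proof (induction d)
  case 0 then show ?case by (simp add: cmp_refl[OF cR])
next
  case (Suc d)
  show ?case
  proof (cases "i = Suc d")
    case True then show ?thesis by (simp add: cmp_refl[OF cR])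
  next
    case False
    then have "(u ^ i, u ^ d) \<in> R" using Suc by simp
    moreover have "(u ^ d * 1, u ^ d * u) \<in> R" using cmp_mulL[OF cR Suc.prems(1)] .
    ultimately show ?thesis using cmp_trans[OF cR] by (simp add: mult.commute)
  qed
qed

lemma Rsum_mono_set: "finite B \<Longrightarrow> A \<subseteq> B \<Longrightarrow> (sum f A, sum f B) \<in> R"
proof -
  assume "finite B" "A \<subseteq> B"
  then have "sum f B = sum f A + sum f (B - A)" by (metis add.commute sum.subset_diff)
  then show ?thesis using Radd by simp
qed

end

lemma qe_zero: "qe 0 = 0" by (simp add: qe_def qscale_def)

lemma poly_sum_N: "degree p \<le> N \<Longrightarrow> poly p x = (\<Sum>i\<le>N. coeff p i * x ^ i)"
  for x :: "'a::{comm_semiring_0,semiring_1}"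
proof -
  assume "degree p \<le> N"
  have "poly p x = (\<Sum>i\<le>degree p. coeff p i * x ^ i)" by (rule poly_altdef)
  also have "\<dots> = (\<Sum>i\<le>N. coeff p i * x ^ i)"
    by (rule sum.mono_neutral_left) (use \<open>degree p \<le> N\<close> in \<open>auto simp: coeff_eq_0\<close>)
  finally show ?thesis .
qed

lemma qpoly_eval_N: "degree p \<le> N \<Longrightarrow> qpoly_eval p u = (\<Sum>i\<le>N. qe (coeff p i) * u ^ i)"
  unfolding qpoly_eval_def qscale_qe
  by (rule sum.mono_neutral_left) (auto simp: coeff_eq_0 qe_zero)

lemma rpoly_N: "degree p \<le> N \<Longrightarrow> poly (map_poly (of_rat :: rat \<Rightarrow> real) p) r = (\<Sum>i\<le>N. of_rat (coeff p i) * r ^ i)"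
proof -
  assume "degree p \<le> N"
  then have "degree (map_poly (of_rat :: rat \<Rightarrow> real) p) \<le> N" using map_poly_degree_leq order_trans by blast
  then show ?thesis by (simp add: poly_sum_N coeff_map_poly)
qed

lemma npoly_N: "degree p \<le> N \<Longrightarrow> npoly_eval p u = (\<Sum>i\<le>N. of_nat (coeff p i) * u ^ i)"
proof -
  assume "degree p \<le> N"
  then have "degree (map_poly of_nat p :: 'a poly) \<le> N" for x :: "'a::comm_semiring_1"
    using map_poly_degree_leq order_trans by blast
  then show ?thesis unfolding npoly_eval_def by (simp add: poly_sum_N coeff_map_poly)
qed

definition geo :: "rat \<Rightarrow> nat \<Rightarrow> rat poly" where
  "geo e m = (\<Sum>j\<le>m. monom (e ^ (j + 1)) j)"

lemma coeff_geo: "coeff (geo e m) i = (if i \<le> m then e ^ (i + 1) else 0)"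
  unfolding geo_def by (simp add: coeff_sum coeff_monom)

lemma degree_geo: "degree (geo e m) \<le> m"
  unfolding geo_def by (rule degree_sum_le) (auto intro: order_trans[OF degree_monom_le])

lemma geo_nonneg: "e \<ge> 0 \<Longrightarrow> nonneg_qpoly (geo e m)"
  unfolding nonneg_qpoly_def coeff_geo by simp

lemma geo_eval: "qpoly_eval (geo e m) u = (\<Sum>j\<le>m. qscale (e ^ (j + 1)) (u ^ j))"
  unfolding qpoly_eval_N[OF degree_geo] coeff_geo qscale_qe by simp

lemma geo_real: "poly (map_poly (of_rat :: rat \<Rightarrow> real) (geo e m)) r = (\<Sum>j\<le>m. of_rat e ^ (j + 1) * r ^ j)"
  unfolding rpoly_N[OF degree_geo] coeff_geo by (simp add: of_rat_power of_rat_mult)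

lemma rpoly_mult: "map_poly (of_rat :: rat \<Rightarrow> real) (p * q) = map_poly of_rat p * map_poly of_rat q"
  by (rule poly_eqI) (simp add: coeff_mult coeff_map_poly of_rat_sum of_rat_mult)

lemma rpoly_add: "map_poly (of_rat :: rat \<Rightarrow> real) (p + q) = map_poly of_rat p + map_poly of_rat q"
  by (rule poly_eqI) (simp add: coeff_map_poly of_rat_add)

lemma nonneg_mult: "nonneg_qpoly p \<Longrightarrow> nonneg_qpoly q \<Longrightarrow> nonneg_qpoly (p * q)"
  unfolding nonneg_qpoly_def coeff_mult by (simp add: sum_nonneg)

lemma nonneg_add: "nonneg_qpoly p \<Longrightarrow> nonneg_qpoly q \<Longrightarrow> nonneg_qpoly (p + q)"
  unfolding nonneg_qpoly_def by simp

lemma nonneg_1: "nonneg_qpoly 1"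
  unfolding nonneg_qpoly_def by (simp add: coeff_1)

lemma nonneg_nat: "nonneg_qpoly (map_poly of_nat P)"
  unfolding nonneg_qpoly_def by (simp add: coeff_map_poly)

lemma qpoly_eval_map: "qpoly_eval p u = poly (map_poly qe p) u"
proof -
  have "degree (map_poly qe p :: 'a poly) \<le> degree p" for x :: "'a::comm_semiring_1"
    by (rule map_poly_degree_leq)
  then show ?thesis unfolding qpoly_eval_def qscale_qe
    by (simp add: poly_sum_N coeff_map_poly qe_zero)
qed

context
  assumes SF: "is_semifield TYPE('a::comm_semiring_1)"
    and CZ: "char_zero_sr TYPE('a)"
begin

lemma map_qe_mult: "nonneg_qpoly p \<Longrightarrow> nonneg_qpoly q \<Longrightarrow>
   (map_poly qe (p * q) :: 'a poly) = map_poly qe p * map_poly qe q"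
  unfolding nonneg_qpoly_def
  by (rule poly_eqI) (simp add: coeff_mult coeff_map_poly qe_zero qe_sum[OF SF CZ] qe_mult[OF SF CZ])

lemma map_qe_add: "nonneg_qpoly p \<Longrightarrow> nonneg_qpoly q \<Longrightarrow>
   (map_poly qe (p + q) :: 'a poly) = map_poly qe p + map_poly qe q"
  unfolding nonneg_qpoly_def
  by (rule poly_eqI) (simp add: coeff_map_poly qe_zero qe_add[OF SF CZ])

lemma qpoly_eval_mult: "nonneg_qpoly p \<Longrightarrow> nonneg_qpoly q \<Longrightarrow>
   qpoly_eval (p * q) (u::'a) = qpoly_eval p u * qpoly_eval q u"
  by (simp add: qpoly_eval_map map_qe_mult)

lemma qpoly_eval_add: "nonneg_qpoly p \<Longrightarrow> nonneg_qpoly q \<Longrightarrow>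
   qpoly_eval (p + q) (u::'a) = qpoly_eval p u + qpoly_eval q u"
  by (simp add: qpoly_eval_map map_qe_add)

lemma qpoly_eval_1: "qpoly_eval 1 (u::'a) = 1"
  by (simp add: qpoly_eval_map qe_1[OF SF CZ])

lemma qpoly_eval_nat: "qpoly_eval (map_poly of_nat P) (u::'a) = npoly_eval P u"
proof -
  have "map_poly qe (map_poly of_nat P) = (map_poly of_nat P :: 'a poly)"
    by (rule poly_eqI) (simp add: coeff_map_poly qe_nat[OF SF CZ] qe_zero)
  then show ?thesis by (simp add: qpoly_eval_map npoly_eval_def)
qed

end



lemma mh_0: "mono_hom_Rplus f \<Longrightarrow> f 0 = 0" unfolding mono_hom_Rplus_def by blast
lemma mh_1: "mono_hom_Rplus f \<Longrightarrow> f 1 = 1" unfolding mono_hom_Rplus_def by blast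
lemma mh_add: "mono_hom_Rplus f \<Longrightarrow> f (a + b) = f a + f b" unfolding mono_hom_Rplus_def by blast
lemma mh_mult: "mono_hom_Rplus f \<Longrightarrow> f (a * b) = f a * f b" unfolding mono_hom_Rplus_def by blast
lemma mh_nonneg: "mono_hom_Rplus f \<Longrightarrow> f a \<ge> 0" unfolding mono_hom_Rplus_def by blast
lemma mh_mono: "mono_hom_Rplus f \<Longrightarrow> a \<le> b \<Longrightarrow> f a \<le> f b" unfolding mono_hom_Rplus_def by blast

lemma mh_sum: "mono_hom_Rplus f \<Longrightarrow> f (sum g A) = (\<Sum>i\<in>A. f (g i))"
  by (induction A rule: infinite_finite_induct) (simp_all add: mh_0 mh_add)

lemma mh_pow: "mono_hom_Rplus f \<Longrightarrow> f (a ^ n) = f a ^ n"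
  by (induction n) (simp_all add: mh_1 mh_mult)

lemma mh_nat: "mono_hom_Rplus f \<Longrightarrow> f (of_nat n) = of_nat n"
  by (induction n) (simp_all add: mh_0 mh_1 mh_add)

context
  assumes SF: "is_semifield TYPE('a::{comm_semiring_1,preorder})"
    and CZ: "char_zero_sr TYPE('a)"
begin

lemma mh_qe: assumes "mono_hom_Rplus (f :: 'a \<Rightarrow> real)" "q \<ge> 0" shows "f (qe q) = of_rat q"
proof -
  obtain a b where ab: "b > 0" "q = of_nat a / of_nat b" "(qe q :: 'a) = of_nat a * sf_inv (of_nat b)"
    using qe_repr[OF SF CZ assms(2)] by blast
  have "(of_nat b :: 'a) * sf_inv (of_nat b) = 1" using inv_r[OF SF CZ] of_nat_nz[OF SF CZ] ab(1) by simp
  then have "f (of_nat b) * f (sf_inv (of_nat b)) = 1" using assms(1) by (metis mh_1 mh_mult)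
  then have "f (sf_inv (of_nat b)) = 1 / of_nat b" using mh_nat[OF assms(1)] ab(1)
    by (simp add: field_simps)
  then show ?thesis using ab mh_mult[OF assms(1)] mh_nat[OF assms(1)] by (simp add: of_rat_divide)
qed

lemma mh_qpoly: assumes "mono_hom_Rplus (f :: 'a \<Rightarrow> real)" "nonneg_qpoly p"
  shows "f (qpoly_eval p u) = poly (map_poly of_rat p) (f u)"
  using assms unfolding qpoly_eval_N[OF order_refl] rpoly_N[OF order_refl] nonneg_qpoly_def
  by (simp add: mh_sum mh_mult mh_pow mh_qe)

end

lemma rat_below: "(d::real) > 0 \<Longrightarrow> \<exists>e::rat. 0 < e \<and> of_rat e < d"
  using of_rat_dense[of 0 d] by auto

lemma geo_bound: "0 \<le> (t::real) \<Longrightarrow> t \<le> 1/2 \<Longrightarrow> (\<Sum>j\<le>m. t ^ j) \<le> 2 - t ^ m"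
proof (induction m)
  case 0 then show ?case by simp
next
  case (Suc m)
  have "t ^ m * (2 * t - 1) \<le> 0" using Suc.prems by (simp add: mult_nonneg_nonpos)
  then show ?case using Suc by (simp add: algebra_simps)
qed

lemma geo_real_bound:
  assumes "0 \<le> r" "0 < d" "of_rat d * r \<le> 1/2"
  shows "poly (map_poly (of_rat :: rat \<Rightarrow> real) (geo d m)) r \<le> 2 * of_rat d"
proof -
  have "poly (map_poly (of_rat :: rat \<Rightarrow> real) (geo d m)) r = of_rat d * (\<Sum>j\<le>m. (of_rat d * r) ^ j)"
    unfolding geo_real by (simp add: sum_distrib_left power_mult_distrib mult.assoc)
  also have "\<dots> \<le> of_rat d * 2"
  proof (rule mult_left_mono)
    have "(\<Sum>j\<le>m. (of_rat d * r) ^ j) \<le> 2 - (of_rat d * r) ^ m"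
      using assms by (intro geo_bound) simp_all
    also have "\<dots> \<le> 2" using assms by simp
    finally show "(\<Sum>j\<le>m. (of_rat d * r) ^ j) \<le> 2" .
  qed (use assms in simp)
  finally show ?thesis by simp
qed

lemma geo_real_nonneg: "0 \<le> r \<Longrightarrow> 0 \<le> d \<Longrightarrow> 0 \<le> poly (map_poly (of_rat :: rat \<Rightarrow> real) (geo d m)) r"
  unfolding geo_real by (intro sum_nonneg) simp

lemma small_rat:
  assumes "(r::real) \<ge> 0" "(K::real) \<ge> 0" "(e::rat) > 0"
  obtains d :: rat where "d > 0" "of_rat d * r \<le> 1/2" "2 * of_rat d * K \<le> of_rat e"
proof -
  obtain n :: nat where n: "r \<le> of_nat n" using real_arch_simple by blast
  obtain k :: nat where k: "K \<le> of_nat k" using real_arch_simple by blast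
  define d where "d = min (1 / (2 * (of_nat n + 1))) (e / (2 * (of_nat k + 1)))"
  have d0: "d > 0" unfolding d_def using assms by simp
  have "d \<le> 1 / (2 * (of_nat n + 1))" unfolding d_def by simp
  then have "(of_rat d :: real) \<le> of_rat (1 / (2 * (of_nat n + 1)))" using of_rat_less_eq by blast
  then have d1: "of_rat d \<le> 1 / (2 * (of_nat n + 1) :: real)"
    by (simp add: of_rat_divide of_rat_add of_rat_mult)
  have "d \<le> e / (2 * (of_nat k + 1))" unfolding d_def by simp
  then have "(of_rat d :: real) \<le> of_rat (e / (2 * (of_nat k + 1)))" using of_rat_less_eq by blast
  then have d2: "of_rat d \<le> of_rat e / (2 * (of_nat k + 1) :: real)"
    by (simp add: of_rat_divide of_rat_add of_rat_mult)
  have "of_rat d * r \<le> 1 / (2 * (of_nat n + 1)) * (of_nat n + 1)"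
    using d1 n assms d0 by (intro mult_mono) simp_all
  also have "\<dots> = 1/2" by simp
  finally have A: "of_rat d * r \<le> 1/2" .
  have "2 * of_rat d * K \<le> 2 * (of_rat e / (2 * (of_nat k + 1))) * (of_nat k + 1)"
    using d2 k assms d0 by (intro mult_mono) simp_all
  also have "\<dots> = of_rat e" by (simp add: field_simps)
  finally have B: "2 * of_rat d * K \<le> of_rat e" .
  show ?thesis using that d0 A B by blast
qed



context
  fixes u x y :: "'a::{comm_semiring_1,preorder}"
  assumes SF: "is_semifield TYPE('a)"
    and CZ: "char_zero_sr TYPE('a)"
    and PO: "preordered_sr TYPE('a)"
    and ZO: "(0::'a) \<le> 1"
    and UNI: "poly_universal u"
begin

lemma LEc: "cmp {(a::'a, b). a \<le> b}" using cmp_LE[OF PO] .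

lemma le_add2: "(a::'a) \<le> b \<Longrightarrow> c \<le> d \<Longrightarrow> a + c \<le> b + d"
  using cmp_add[OF LEc, of a b c d] by simp
lemma le_mult2: "(a::'a) \<le> b \<Longrightarrow> c \<le> d \<Longrightarrow> a * c \<le> b * d"
  using cmp_mul[OF LEc, of a b c d] by simp

lemma d31:
  assumes H: "\<forall>r::real. \<forall>\<epsilon>::rat. r \<ge> 0 \<longrightarrow> \<epsilon> > 0 \<longrightarrow>
             (\<exists>p::rat poly. nonneg_qpoly p \<and> poly (map_poly of_rat p) r \<le> of_rat \<epsilon>
                \<and> y \<le> x + qpoly_eval p u)"
  shows "\<forall>f. mono_hom_Rplus f \<longrightarrow> f x \<ge> f y"
proof (intro allI impI)
  fix f :: "'a \<Rightarrow> real" assume mh: "mono_hom_Rplus f"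
  show "f x \<ge> f y"
  proof (rule ccontr)
    assume "\<not> f x \<ge> f y"
    then obtain e :: rat where e: "0 < e" "of_rat e < f y - f x" using rat_below[of "f y - f x"] by auto
    obtain p where p: "nonneg_qpoly p" "poly (map_poly of_rat p) (f u) \<le> of_rat e" "y \<le> x + qpoly_eval p u"
      using H[rule_format, OF mh_nonneg[OF mh, of u] e(1)] by blast
    have "f y \<le> f (x + qpoly_eval p u)" using mh_mono[OF mh p(3)] .
    also have "\<dots> = f x + poly (map_poly of_rat p) (f u)"
      using mh_add[OF mh] mh_qpoly[OF SF CZ mh p(1)] by simp
    finally show False using p(2) e(2) by simp
  qed
qed

lemma d41:
  assumes H: "\<forall>r::real. \<forall>\<epsilon>::rat. r \<ge> 0 \<longrightarrow> \<epsilon> > 0 \<longrightarrow>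
             (\<exists>p::rat poly. nonneg_qpoly p \<and> poly (map_poly of_rat p) r \<le> 1 + of_rat \<epsilon>
                \<and> y \<le> qpoly_eval p u * x)"
  shows "\<forall>f. mono_hom_Rplus f \<longrightarrow> f x \<ge> f y"
proof (intro allI impI)
  fix f :: "'a \<Rightarrow> real" assume mh: "mono_hom_Rplus f"
  have fx: "f x \<ge> 0" using mh_nonneg[OF mh] .
  have key: "f y \<le> (1 + of_rat e) * f x" if e0: "e > 0" for e
  proof -
    obtain p where p: "nonneg_qpoly p" "poly (map_poly of_rat p) (f u) \<le> 1 + of_rat e" "y \<le> qpoly_eval p u * x"
      using H[rule_format, OF mh_nonneg[OF mh, of u] e0] by blast
    have "f y \<le> f (qpoly_eval p u * x)" using mh_mono[OF mh p(3)] .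
    also have "\<dots> = poly (map_poly of_rat p) (f u) * f x"
      using mh_mult[OF mh] mh_qpoly[OF SF CZ mh p(1)] by simp
    also have "\<dots> \<le> (1 + of_rat e) * f x" using p(2) fx by (rule mult_right_mono)
    finally show ?thesis .
  qed
  show "f x \<ge> f y"
  proof (rule ccontr)
    assume "\<not> f x \<ge> f y"
    have "f x \<noteq> 0"
    proof
      assume "f x = 0"
      then have "f y \<le> 0" using key[of 1] by simp
      then show False using \<open>\<not> f x \<ge> f y\<close> \<open>f x = 0\<close> by simp
    qed
    then have fx0: "f x > 0" using fx by simp
    have "(f y - f x) / f x > 0" using fx0 \<open>\<not> f x \<ge> f y\<close> by simp
    then obtain e :: rat where e: "0 < e" "of_rat e < (f y - f x) / f x"
      using rat_below by blast
    have "of_rat e * f x < f y - f x" using e(2) fx0 by (simp add: pos_less_divide_eq)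
    moreover have "(1 + of_rat e) * f x = f x + of_rat e * f x" by (simp add: distrib_right)
    ultimately show False using key[OF e(1)] by linarith
  qed
qed

lemma d23:
  assumes H: "\<forall>\<epsilon>::rat. \<epsilon> > 0 \<longrightarrow> (\<exists>m::nat. y \<le> x + (\<Sum>j\<le>m. qscale (\<epsilon> ^ (j + 1)) (u ^ j)))"
  shows "\<forall>r::real. \<forall>\<epsilon>::rat. r \<ge> 0 \<longrightarrow> \<epsilon> > 0 \<longrightarrow>
             (\<exists>p::rat poly. nonneg_qpoly p \<and> poly (map_poly of_rat p) r \<le> of_rat \<epsilon>
                \<and> y \<le> x + qpoly_eval p u)"
proof (intro allI impI)
  fix r :: real and e :: rat assume r: "r \<ge> 0" and e: "e > 0"
  obtain d where d: "d > 0" "of_rat d * r \<le> 1/2" "2 * of_rat d * (1::real) \<le> of_rat e"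
    by (rule small_rat[of r 1 e]) (use r e in auto)
  obtain m where m: "y \<le> x + (\<Sum>j\<le>m. qscale (d ^ (j + 1)) (u ^ j))" using H[rule_format, OF d(1)] by blast
  show "\<exists>p::rat poly. nonneg_qpoly p \<and> poly (map_poly of_rat p) r \<le> of_rat e \<and> y \<le> x + qpoly_eval p u"
  proof (intro exI conjI)
    show "nonneg_qpoly (geo d m)" using geo_nonneg d(1) by simp
    show "poly (map_poly of_rat (geo d m)) r \<le> of_rat e" using geo_real_bound[OF r d(1) d(2), of m] d(3) by simp
    show "y \<le> x + qpoly_eval (geo d m) u" using m by (simp only: geo_eval)
  qed
qed

lemma d24:
  assumes xnz: "x \<noteq> 0"
    and H: "\<forall>\<epsilon>::rat. \<epsilon> > 0 \<longrightarrow> (\<exists>m::nat. y \<le> x + (\<Sum>j\<le>m. qscale (\<epsilon> ^ (j + 1)) (u ^ j)))"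
  shows "\<forall>r::real. \<forall>\<epsilon>::rat. r \<ge> 0 \<longrightarrow> \<epsilon> > 0 \<longrightarrow>
             (\<exists>p::rat poly. nonneg_qpoly p \<and> poly (map_poly of_rat p) r \<le> 1 + of_rat \<epsilon>
                \<and> y \<le> qpoly_eval p u * x)"
proof (intro allI impI)
  fix r :: real and e :: rat assume r: "r \<ge> 0" and e: "e > 0"
  obtain P :: "nat poly" where P: "1 \<le> npoly_eval P u * x"
    using UNI xnz unfolding poly_universal_def by auto
  define Pq :: "rat poly" where "Pq = map_poly of_nat P"
  define K where "K = poly (map_poly (of_rat :: rat \<Rightarrow> real) Pq) r"
  have K0: "K \<ge> 0" unfolding K_def rpoly_N[OF order_refl] Pq_def
    using r by (intro sum_nonneg) (simp add: coeff_map_poly)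
  obtain d where d: "d > 0" "of_rat d * r \<le> 1/2" "2 * of_rat d * K \<le> of_rat e"
    by (rule small_rat[OF r K0 e]) auto
  obtain m where m: "y \<le> x + (\<Sum>j\<le>m. qscale (d ^ (j + 1)) (u ^ j))" using H[rule_format, OF d(1)] by blast
  define G where "G = qpoly_eval (geo d m) u"
  have gn: "nonneg_qpoly (geo d m)" using geo_nonneg d(1) by simp
  have pn: "nonneg_qpoly Pq" unfolding Pq_def by (rule nonneg_nat)
  define p where "p = 1 + geo d m * Pq"
  show "\<exists>p::rat poly. nonneg_qpoly p \<and> poly (map_poly of_rat p) r \<le> 1 + of_rat e \<and> y \<le> qpoly_eval p u * x"
  proof (intro exI conjI)
    show "nonneg_qpoly p" unfolding p_def using nonneg_add[OF nonneg_1 nonneg_mult[OF gn pn]] .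
    have "poly (map_poly (of_rat :: rat \<Rightarrow> real) p) r = 1 + poly (map_poly of_rat (geo d m)) r * K"
      unfolding p_def K_def by (simp add: rpoly_add rpoly_mult)
    also have "\<dots> \<le> 1 + 2 * of_rat d * K"
      using geo_real_bound[OF r d(1) d(2), of m] K0 by (simp add: mult_right_mono)
    also have "\<dots> \<le> 1 + of_rat e" using d(3) by simp
    finally show "poly (map_poly of_rat p) r \<le> 1 + of_rat e" .
    have qp: "qpoly_eval p u = 1 + G * npoly_eval P u"
      unfolding p_def G_def qpoly_eval_add[OF SF CZ nonneg_1 nonneg_mult[OF gn pn]]
          qpoly_eval_mult[OF SF CZ gn pn] qpoly_eval_1[OF SF CZ]
      by (simp only: Pq_def qpoly_eval_nat[OF SF CZ])
    have "y \<le> x + G" using m unfolding G_def by (simp only: geo_eval)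
    also have "\<dots> \<le> x + G * (npoly_eval P u * x)"
      using le_add2[OF order_refl le_mult2[OF order_refl P], of x G] by simp
    also have "\<dots> = qpoly_eval p u * x" unfolding qp by (simp add: algebra_simps)
    finally show "y \<le> qpoly_eval p u * x" .
  qed
qed

end



definition LEr :: "('a::{comm_semiring_1,preorder} \<times> 'a) set" where "LEr = {(a, b). a \<le> b}"

definition Sg :: "rat \<Rightarrow> 'a::comm_semiring_1 \<Rightarrow> nat \<Rightarrow> 'a" where
  "Sg e u m = (\<Sum>j\<le>m. qscale (e ^ (j + 1)) (u ^ j))"

lemma Sg_alt: "Sg e u m = (\<Sum>j\<le>m. qe (e ^ (j + 1)) * u ^ j)"
  unfolding Sg_def qscale_qe ..

lemma Sg_Suc: "Sg e u (Suc m) = Sg e u m + qe (e ^ (Suc m + 1)) * u ^ Suc m"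
  unfolding Sg_alt by simp

lemma Sg_0: "Sg e u 0 = qe e"
  unfolding Sg_alt by simp

context
  fixes R :: "('a::{comm_semiring_1,preorder} \<times> 'a) set"
  assumes SF: "is_semifield TYPE('a)" and CZ: "char_zero_sr TYPE('a)"
    and cR: "cmp R" and LR: "LEr \<subseteq> R" and ZO: "(0::'a) \<le> 1"
begin

lemma LR': "{(a, b). a \<le> b} \<subseteq> R" using LR unfolding LEr_def .

lemma qe_monoR: "0 \<le> q \<Longrightarrow> q \<le> q' \<Longrightarrow> (qe q :: 'a, qe q') \<in> R"
proof -
  assume "0 \<le> q" "q \<le> q'"
  then have "(qe q' :: 'a) = qe q + qe (q' - q)" using qe_add[OF SF CZ, of q "q' - q"] by simp
  then show ?thesis using Radd[OF cR LR' ZO] by simp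
qed

lemma Sg_monoR: "m \<le> m' \<Longrightarrow> (Sg e u m, Sg e u m') \<in> R"
  unfolding Sg_def by (rule Rsum_mono_set[OF cR LR' ZO]) auto

lemma term_leR: "j \<le> m \<Longrightarrow> (qe (e ^ (j + 1)) * u ^ j, Sg e u m) \<in> R"
proof -
  assume "j \<le> m"
  have "(sum (\<lambda>j. qe (e ^ (j + 1)) * u ^ j) {j}, sum (\<lambda>j. qe (e ^ (j + 1)) * u ^ j) {..m}) \<in> R"
    by (rule Rsum_mono_set[OF cR LR' ZO]) (use \<open>j \<le> m\<close> in auto)
  then show ?thesis unfolding Sg_alt by simp
qed

end

context
  fixes u x y :: "'a::{comm_semiring_1,preorder}"
  assumes SF: "is_semifield TYPE('a)"
    and CZ: "char_zero_sr TYPE('a)"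
    and PO: "preordered_sr TYPE('a)"
    and ZO: "(0::'a) \<le> 1"
    and UNI: "poly_universal u"
begin

lemma cLE: "cmp (LEr :: ('a \<times> 'a) set)" unfolding LEr_def using cmp_LE[OF PO] .

lemma u1: "(1::'a) \<le> u" using UNI unfolding poly_universal_def by blast

lemma bound_pow:
  assumes "(a::'a) \<noteq> 0"
  obtains N d0 where "\<And>D. D \<ge> d0 \<Longrightarrow> a \<le> of_nat N * u ^ D"
proof -
  obtain P :: "nat poly" where P: "a \<le> npoly_eval P u"
    using UNI assms unfolding poly_universal_def by auto
  have "a \<le> of_nat (\<Sum>i\<le>degree P. coeff P i) * u ^ D" if D: "D \<ge> degree P" for D
  proof -
    have "npoly_eval P u = (\<Sum>i\<le>degree P. of_nat (coeff P i) * u ^ i)" by (rule npoly_N) simp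
    moreover have "((\<Sum>i\<le>degree P. of_nat (coeff P i) * u ^ i), (\<Sum>i\<le>degree P. of_nat (coeff P i) * u ^ D)) \<in> LEr"
    proof (rule cmp_sum[OF cLE])
      fix i assume "i \<in> {..degree P}"
      then have "i \<le> D" using D by simp
      have "(1, u) \<in> LEr" using u1 unfolding LEr_def by simp
      then have "(u ^ i, u ^ D) \<in> LEr" using Rpow_exp[OF cLE _ ZO] \<open>i \<le> D\<close> unfolding LEr_def by simp
      then show "(of_nat (coeff P i) * u ^ i, of_nat (coeff P i) * u ^ D) \<in> LEr" by (rule cmp_mulL[OF cLE])
    qed
    moreover have "(\<Sum>i\<le>degree P. of_nat (coeff P i) * u ^ D) = (of_nat (\<Sum>i\<le>degree P. coeff P i) * u ^ D :: 'a)"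
      by (simp add: sum_distrib_right)
    ultimately show ?thesis using P unfolding LEr_def by (auto intro: order_trans)
  qed
  then show ?thesis using that by blast
qed

end



context
  fixes u x y :: "'a::{comm_semiring_1,preorder}"
  assumes SF: "is_semifield TYPE('a)"
    and CZ: "char_zero_sr TYPE('a)"
    and PO: "preordered_sr TYPE('a)"
    and ZO: "(0::'a) \<le> 1"
    and UNI: "poly_universal u"
  fixes e :: rat
  assumes e0: "e > 0"
    and bad: "\<forall>m. \<not> y \<le> x + Sg e u m"
begin

lemma ladd: "(a::'a) \<le> b \<Longrightarrow> c \<le> d \<Longrightarrow> a + c \<le> b + d"
  using cmp_add[OF cmp_LE[OF PO], of a b c d] by simp
lemma lmul: "(a::'a) \<le> b \<Longrightarrow> c \<le> d \<Longrightarrow> a * c \<le> b * d"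
  using cmp_mul[OF cmp_LE[OF PO], of a b c d] by simp

lemma cLE': "cmp (LEr :: ('a \<times> 'a) set)" unfolding LEr_def using cmp_LE[OF PO] .

lemma le_addr: "(a::'a) \<le> a + b"
  using Radd[OF cmp_LE[OF PO] _ ZO] by simp

lemma LE_good: "\<not> y + w \<le> x + Sg e u m + w"
proof
  assume h: "y + w \<le> x + Sg e u m + w"
  define B where "B = x + Sg e u m"
  have h': "y + w \<le> B + w" using h unfolding B_def .
  show False
  proof (cases "w = 0")
    case True then show False using h bad by simp
  next
    case False
    obtain N d0 where Nd: "\<And>D. D \<ge> d0 \<Longrightarrow> w \<le> of_nat N * u ^ D"
      using bound_pow[OF SF CZ PO ZO UNI False] by blast
    define D where "D = Suc (m + d0)"
    have wD: "w \<le> of_nat N * u ^ D" by (rule Nd) (simp add: D_def)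
    have nt: "of_nat n * y + w \<le> of_nat n * B + w" for n
    proof (induction n)
      case 0 then show ?case by simp
    next
      case (Suc n)
      have "of_nat (Suc n) * y + w = y + (of_nat n * y + w)" by (simp add: algebra_simps)
      also have "\<dots> \<le> y + (of_nat n * B + w)" using ladd[OF order_refl Suc] .
      also have "\<dots> = of_nat n * B + (y + w)" by (simp add: algebra_simps)
      also have "\<dots> \<le> of_nat n * B + (B + w)" using ladd[OF order_refl h'] .
      also have "\<dots> = of_nat (Suc n) * B + w" by (simp add: algebra_simps)
      finally show ?case .
    qed
    have pos: "e ^ (D + 1) / (of_nat N + 1) > 0" using e0 by simp
    obtain n :: nat where n: "n > 0" "inverse (of_nat n) < e ^ (D + 1) / (of_nat N + 1)"
      using ex_inverse_of_nat_less[OF pos] by blast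
    define q :: rat where "q = 1 / of_nat n"
    have q0: "q \<ge> 0" unfolding q_def by simp
    have qn: "qe q * of_nat n = (1::'a)"
    proof -
      have "qe q * of_nat n = (qe (q * of_nat n) :: 'a)"
        using qe_mult[OF SF CZ q0, of "of_nat n"] qe_nat[OF SF CZ, of n] by simp
      also have "q * of_nat n = 1" unfolding q_def using n(1) by simp
      finally show ?thesis using qe_1[OF SF CZ] by simp
    qed
    have qN: "q * of_nat N \<le> e ^ (D + 1)"
    proof -
      have "q * of_nat N \<le> q * (of_nat N + 1)" using q0 by (simp add: mult_left_mono)
      also have "\<dots> < e ^ (D + 1) / (of_nat N + 1) * (of_nat N + 1)"
        using n(2) unfolding q_def by (intro mult_strict_right_mono) (simp_all add: inverse_eq_divide)
      also have "\<dots> = e ^ (D + 1)" by simp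
      finally show ?thesis by simp
    qed
    have "qe q * (of_nat n * y + w) \<le> qe q * (of_nat n * B + w)"
      using lmul[OF order_refl nt] .
    moreover have "qe q * (of_nat n * y + w) = (qe q * of_nat n) * y + qe q * w" by (simp add: algebra_simps)
    moreover have "qe q * (of_nat n * B + w) = (qe q * of_nat n) * B + qe q * w" by (simp add: algebra_simps)
    ultimately have st: "y + qe q * w \<le> B + qe q * w" unfolding qn by simp
    have "y \<le> y + qe q * w" by (rule le_addr)
    also have "\<dots> \<le> B + qe q * w" by (rule st)
    also have "\<dots> \<le> B + qe q * (of_nat N * u ^ D)" using ladd[OF order_refl lmul[OF order_refl wD]] .
    also have "qe q * (of_nat N * u ^ D) = qe (q * of_nat N) * u ^ D"
      using qe_mult[OF SF CZ q0, of "of_nat N"] qe_nat[OF SF CZ, of N] by (simp add: mult.assoc)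
    also have "B + qe (q * of_nat N) * u ^ D \<le> B + qe (e ^ (D + 1)) * u ^ D"
    proof (rule ladd[OF order_refl], rule lmul[OF _ order_refl])
      show "qe (q * of_nat N) \<le> (qe (e ^ (D + 1)) :: 'a)"
        using qe_monoR[OF SF CZ cLE' order_refl ZO, of "q * of_nat N" "e ^ (D + 1)"] qN q0
        unfolding LEr_def by simp
    qed
    also have "B + qe (e ^ (D + 1)) * u ^ D = x + (Sg e u m + qe (e ^ (D + 1)) * u ^ D)"
      unfolding B_def by (simp add: add.assoc)
    also have "\<dots> \<le> x + Sg e u D"
    proof (rule ladd[OF order_refl])
      have "Sg e u m \<le> Sg e u (m + d0)"
        using Sg_monoR[OF SF CZ cLE' order_refl ZO, of m "m + d0"] unfolding LEr_def by simp
      then have "Sg e u m + qe (e ^ (D + 1)) * u ^ D \<le> Sg e u (m + d0) + qe (e ^ (D + 1)) * u ^ D"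
        using ladd[OF _ order_refl] by blast
      also have "\<dots> = Sg e u D" unfolding D_def Sg_Suc by simp
      finally show "Sg e u m + qe (e ^ (D + 1)) * u ^ D \<le> Sg e u D" .
    qed
    finally show False using bad by blast
  qed
qed


definition GS :: "('a \<times> 'a) set set" where
  "GS = {R. cmp R \<and> LEr \<subseteq> R \<and> (\<forall>m w. (y + w, x + Sg e u m + w) \<notin> R)}"

lemma LE_in: "LEr \<in> GS"
  unfolding GS_def using cLE' LE_good unfolding LEr_def by blast

lemma zorn_GS: "\<exists>M\<in>GS. \<forall>X\<in>GS. M \<subseteq> X \<longrightarrow> X = M"
proof (rule Zorn_Lemma2, intro ballI)
  fix C assume C: "C \<in> chains GS"
  then have CG: "C \<subseteq> GS" and ch: "\<And>X Y. X \<in> C \<Longrightarrow> Y \<in> C \<Longrightarrow> X \<subseteq> Y \<or> Y \<subseteq> X"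
    unfolding chains_def chain_subset_def by blast+
  show "\<exists>U\<in>GS. \<forall>X\<in>C. X \<subseteq> U"
  proof (cases "C = {}")
    case True then show ?thesis using LE_in by blast
  next
    case False
    then obtain X0 where X0: "X0 \<in> C" by blast
    have cX: "cmp X" if "X \<in> C" for X using that CG unfolding GS_def by blast
    have LX: "LEr \<subseteq> X" if "X \<in> C" for X using that CG unfolding GS_def by blast
    have bX: "(y + w, x + Sg e u m + w) \<notin> X" if "X \<in> C" for X m w using that CG unfolding GS_def by blast
    have "cmp (\<Union>C)"
      unfolding cmp_def
    proof (intro conjI allI impI)
      fix a show "(a, a) \<in> \<Union>C" using cmp_refl[OF cX[OF X0]] X0 by blast
    next
      fix a b c assume "(a, b) \<in> \<Union>C" "(b, c) \<in> \<Union>C"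
      then obtain X1 X2 where "X1 \<in> C" "X2 \<in> C" "(a, b) \<in> X1" "(b, c) \<in> X2" by blast
      then show "(a, c) \<in> \<Union>C"
        using ch[of X1 X2] cmp_trans[OF cX] by blast
    next
      fix a b c assume "(a, b) \<in> \<Union>C"
      then obtain X1 where "X1 \<in> C" "(a, b) \<in> X1" by blast
      then show "(a + c, b + c) \<in> \<Union>C" using cmp_addR[OF cX] by blast
    next
      fix a b c assume "(a, b) \<in> \<Union>C"
      then obtain X1 where "X1 \<in> C" "(a, b) \<in> X1" by blast
      then show "(a * c, b * c) \<in> \<Union>C" using cmp_mulR[OF cX] by blast
    qed
    moreover have "LEr \<subseteq> \<Union>C" using LX X0 by blast
    moreover have "\<forall>m w. (y + w, x + Sg e u m + w) \<notin> \<Union>C" using bX by blast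
    ultimately have "\<Union>C \<in> GS" unfolding GS_def by blast
    then show ?thesis by blast
  qed
qed

context
  fixes M :: "('a \<times> 'a) set"
  assumes MG: "M \<in> GS" and Mmax: "\<forall>X\<in>GS. M \<subseteq> X \<longrightarrow> X = M"
    and ynz: "y \<noteq> 0"
begin

lemma cM: "cmp M" using MG unfolding GS_def by blast
lemma LM: "LEr \<subseteq> M" using MG unfolding GS_def by blast
lemma LM': "{(a, b). a \<le> b} \<subseteq> M" using LM unfolding LEr_def .
lemma Mbad: "(y + w, x + Sg e u m + w) \<notin> M" using MG unfolding GS_def by blast
lemma Mbad0: "(y, x + Sg e u m) \<notin> M" using Mbad[of 0] by simp

lemma M_cancel: assumes "(a + w, b + w) \<in> M" shows "(a, b) \<in> M"
proof -
  define M' where "M' = {(a, b). \<exists>w. (a + w, b + w) \<in> M}"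
  have "cmp M'"
    unfolding cmp_def
  proof (intro conjI allI impI)
    fix a show "(a, a) \<in> M'" unfolding M'_def using cmp_refl[OF cM] by blast
  next
    fix a b c assume "(a, b) \<in> M'" "(b, c) \<in> M'"
    then obtain w1 w2 where 1: "(a + w1, b + w1) \<in> M" and 2: "(b + w2, c + w2) \<in> M" unfolding M'_def by blast
    have "(a + w1 + w2, b + w1 + w2) \<in> M" using cmp_addR[OF cM 1] .
    moreover have "(b + w2 + w1, c + w2 + w1) \<in> M" using cmp_addR[OF cM 2] .
    ultimately have "(a + (w1 + w2), c + (w1 + w2)) \<in> M"
      using cmp_trans[OF cM] by (metis add.assoc add.commute)
    then show "(a, c) \<in> M'" unfolding M'_def by blast
  next
    fix a b c assume "(a, b) \<in> M'"
    then obtain w where 1: "(a + w, b + w) \<in> M" unfolding M'_def by blast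
    have "(a + w + c, b + w + c) \<in> M" using cmp_addR[OF cM 1] .
    then have "(a + c + w, b + c + w) \<in> M" by (simp add: ac_simps)
    then show "(a + c, b + c) \<in> M'" unfolding M'_def by blast
  next
    fix a b c assume "(a, b) \<in> M'"
    then obtain w where 1: "(a + w, b + w) \<in> M" unfolding M'_def by blast
    have "((a + w) * c, (b + w) * c) \<in> M" using cmp_mulR[OF cM 1] .
    then have "(a * c + w * c, b * c + w * c) \<in> M" by (simp add: distrib_right)
    then show "(a * c, b * c) \<in> M'" unfolding M'_def by blast
  qed
  moreover have MM': "M \<subseteq> M'"
  proof (rule subrelI)
    fix c d assume "(c, d) \<in> M"
    then show "(c, d) \<in> M'" unfolding M'_def by (intro CollectI case_prodI exI[of _ 0]) simp
  qed
  moreover have "LEr \<subseteq> M'" using LM MM' by blast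
  moreover have "\<forall>m w. (y + w, x + Sg e u m + w) \<notin> M'"
  proof (intro allI notI)
    fix m w assume "(y + w, x + Sg e u m + w) \<in> M'"
    then obtain w' where "(y + w + w', x + Sg e u m + w + w') \<in> M" unfolding M'_def by blast
    then have "(y + (w + w'), x + Sg e u m + (w + w')) \<in> M" by (simp add: add.assoc)
    then show False using Mbad by blast
  qed
  ultimately have "M' \<in> GS" unfolding GS_def by blast
  then have "M' = M" using Mmax MM' by blast
  moreover have "(a, b) \<in> M'" unfolding M'_def using assms by blast
  ultimately show ?thesis by simp
qed

lemma M_ext: assumes "(a, b) \<notin> M" shows "\<exists>m z. (y + b * z, x + Sg e u m + a * z) \<in> M"
proof -
  define M' where "M' = {(c, d). \<exists>z. (c + b * z, d + a * z) \<in> M}"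
  have cM': "cmp M'"
    unfolding cmp_def
  proof (intro conjI allI impI)
    fix c show "(c, c) \<in> M'" unfolding M'_def using cmp_refl[OF cM] by (intro CollectI case_prodI exI[of _ 0]) simp
  next
    fix c d f assume "(c, d) \<in> M'" "(d, f) \<in> M'"
    then obtain z1 z2 where 1: "(c + b * z1, d + a * z1) \<in> M" and 2: "(d + b * z2, f + a * z2) \<in> M"
      unfolding M'_def by blast
    have "(c + b * z1 + b * z2, d + a * z1 + b * z2) \<in> M" using cmp_addR[OF cM 1] .
    moreover have "(d + b * z2 + a * z1, f + a * z2 + a * z1) \<in> M" using cmp_addR[OF cM 2] .
    moreover have "d + a * z1 + b * z2 = d + b * z2 + a * z1" by (simp add: ac_simps)
    ultimately have "(c + b * z1 + b * z2, f + a * z2 + a * z1) \<in> M" using cmp_trans[OF cM] by metis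
    moreover have "c + b * z1 + b * z2 = c + b * (z1 + z2)" by (simp add: distrib_left add.assoc)
    moreover have "f + a * z2 + a * z1 = f + a * (z1 + z2)" by (simp add: distrib_left ac_simps)
    ultimately show "(c, f) \<in> M'" unfolding M'_def by auto
  next
    fix c d g assume "(c, d) \<in> M'"
    then obtain z where 1: "(c + b * z, d + a * z) \<in> M" unfolding M'_def by blast
    have "(c + b * z + g, d + a * z + g) \<in> M" using cmp_addR[OF cM 1] .
    then have "(c + g + b * z, d + g + a * z) \<in> M" by (simp add: ac_simps)
    then show "(c + g, d + g) \<in> M'" unfolding M'_def by blast
  next
    fix c d g assume "(c, d) \<in> M'"
    then obtain z where 1: "(c + b * z, d + a * z) \<in> M" unfolding M'_def by blast
    have "((c + b * z) * g, (d + a * z) * g) \<in> M" using cmp_mulR[OF cM 1] .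
    then have "(c * g + b * (z * g), d * g + a * (z * g)) \<in> M" by (simp add: distrib_right mult.assoc)
    then show "(c * g, d * g) \<in> M'" unfolding M'_def by blast
  qed
  have MM': "M \<subseteq> M'"
  proof (rule subrelI)
    fix c d assume "(c, d) \<in> M"
    then show "(c, d) \<in> M'" unfolding M'_def by (intro CollectI case_prodI exI[of _ 0]) simp
  qed
  have abM': "(a, b) \<in> M'" unfolding M'_def using cmp_refl[OF cM, of "a + b"]
    by (intro CollectI case_prodI exI[of _ 1]) (simp add: add.commute)
  have "M' \<notin> GS"
  proof
    assume "M' \<in> GS"
    then have "M' = M" using Mmax MM' by blast
    then show False using abM' assms by simp
  qed
  then obtain m w where "(y + w, x + Sg e u m + w) \<in> M'"
    unfolding GS_def using cM' MM' LM by blast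
  then obtain z where "(y + w + b * z, x + Sg e u m + w + a * z) \<in> M" unfolding M'_def by blast
  then have "(y + b * z + w, x + Sg e u m + a * z + w) \<in> M" by (simp add: ac_simps)
  then have "(y + b * z, x + Sg e u m + a * z) \<in> M" by (rule M_cancel)
  then show ?thesis by blast
qed

lemma M0: "(0, a) \<in> M" using R0[OF cM LM' ZO] .

lemma M_not10: "(1, 0) \<notin> M"
proof
  assume "(1, 0) \<in> M"
  then have "(y * 1, y * 0) \<in> M" by (rule cmp_mulL[OF cM])
  then have "(y, 0) \<in> M" by simp
  then have "(y, x + Sg e u 0) \<in> M" using M0 cmp_trans[OF cM] by blast
  then show False using Mbad0 by blast
qed

lemma M_divide: assumes "(a * t, b * t) \<in> M" "t \<noteq> 0" shows "(a, b) \<in> M"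
proof -
  have "(a * t * sf_inv t, b * t * sf_inv t) \<in> M" using cmp_mulR[OF cM assms(1)] .
  then show ?thesis using inv_r[OF SF CZ assms(2)] by (simp add: mult.assoc)
qed

lemma M_sum0: assumes "a + b = (0::'a)" shows "a = 0"
proof (rule ccontr)
  assume a: "a \<noteq> 0"
  define c where "c = b * sf_inv a"
  have "1 + c = (a + b) * sf_inv a" unfolding c_def using inv_r[OF SF CZ a] by (simp add: distrib_right)
  then have c: "1 + c = 0" using assms by simp
  have "(1 + 0, 1 + c) \<in> M" using cmp_addL[OF cM M0] .
  then show False using c M_not10 by simp
qed

lemma M_total: "(a, b) \<in> M \<or> (b, a) \<in> M"
proof (rule ccontr)
  assume "\<not> ((a, b) \<in> M \<or> (b, a) \<in> M)"
  then have n1: "(a, b) \<notin> M" and n2: "(b, a) \<notin> M" by auto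
  obtain m z where 1: "(y + b * z, x + Sg e u m + a * z) \<in> M" using M_ext[OF n1] by blast
  obtain m' z' where 2: "(y + a * z', x + Sg e u m' + b * z') \<in> M" using M_ext[OF n2] by blast
  define B where "B = x + Sg e u (max m m')"
  have Sm: "(x + Sg e u k, B) \<in> M" if "k \<le> max m m'" for k
    unfolding B_def by (rule cmp_addL[OF cM]) (rule Sg_monoR[OF SF CZ cM LM ZO that])
  have 1: "(y + b * z, B + a * z) \<in> M"
    using cmp_trans[OF cM 1 cmp_addR[OF cM Sm[of m]]] by simp
  have 2: "(y + a * z', B + b * z') \<in> M"
    using cmp_trans[OF cM 2 cmp_addR[OF cM Sm[of m']]] by simp
  show False
  proof (cases "z = 0")
    case True
    then have "(y, B) \<in> M" using 1 by simp
    then show False using Mbad0 unfolding B_def by blast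
  next
    case zn: False
    have "z + z' \<noteq> 0" using M_sum0 zn by blast
    have "((y + b * z) * z', (B + a * z) * z') \<in> M" using cmp_mulR[OF cM 1] .
    moreover have "((y + a * z') * z, (B + b * z') * z) \<in> M" using cmp_mulR[OF cM 2] .
    ultimately have "((y + b * z) * z' + (y + a * z') * z, (B + a * z) * z' + (B + b * z') * z) \<in> M"
      by (rule cmp_add[OF cM])
    moreover have "(y + b * z) * z' + (y + a * z') * z = y * (z + z') + (a + b) * z * z'"
      by (simp add: algebra_simps)
    moreover have "(B + a * z) * z' + (B + b * z') * z = B * (z + z') + (a + b) * z * z'"
      by (simp add: algebra_simps)
    ultimately have "(y * (z + z') + (a + b) * z * z', B * (z + z') + (a + b) * z * z') \<in> M" by simp
    then have "(y * (z + z'), B * (z + z')) \<in> M" by (rule M_cancel)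
    then have "(y, B) \<in> M" using M_divide \<open>z + z' \<noteq> 0\<close> by blast
    then show False using Mbad0 unfolding B_def by blast
  qed
qed

lemma M_qe_refl: assumes "0 \<le> q" "0 \<le> q'" "(qe q, qe q') \<in> M" shows "q \<le> q'"
proof (rule ccontr)
  assume "\<not> q \<le> q'"
  then have d: "q - q' > 0" by simp
  have "(qe q :: 'a) = qe q' + qe (q - q')" using qe_add[OF SF CZ assms(2), of "q - q'"] d by simp
  then have "(qe q' + qe (q - q'), qe q' + 0) \<in> M" using assms(3) by simp
  then have "(qe (q - q') + qe q', 0 + qe q') \<in> M" by (simp add: add.commute)
  then have "(qe (q - q'), 0) \<in> M" by (rule M_cancel)
  then have "(1 * qe (q - q'), 0 * qe (q - q')) \<in> M" by simp
  then have "(1, 0) \<in> M" using M_divide qe_pos_nz[OF SF CZ d] by blast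
  then show False using M_not10 by blast
qed


lemma u_bdd: "\<exists>q0\<ge>0. (u, qe q0) \<in> M"
proof (rule ccontr)
  assume nb: "\<not> (\<exists>q0\<ge>0. (u, qe q0) \<in> M)"
  obtain N d0 where Nd: "\<And>D. D \<ge> d0 \<Longrightarrow> y \<le> of_nat N * u ^ D"
    using bound_pow[OF SF CZ PO ZO UNI ynz] by blast
  define q where "q = of_nat N / e ^ (d0 + 2)"
  have q0: "q \<ge> 0" unfolding q_def using e0 by simp
  have "(qe q, u) \<in> M" using nb M_total q0 by blast
  then have "(qe q * u ^ d0, u * u ^ d0) \<in> M" by (rule cmp_mulR[OF cM])
  then have "(qe (e ^ (d0 + 2)) * (qe q * u ^ d0), qe (e ^ (d0 + 2)) * (u * u ^ d0)) \<in> M"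
    by (rule cmp_mulL[OF cM])
  moreover have "qe (e ^ (d0 + 2)) * (qe q * u ^ d0) = of_nat N * u ^ d0"
  proof -
    have "qe (e ^ (d0 + 2)) * (qe q * u ^ d0) = qe (e ^ (d0 + 2) * q) * u ^ d0"
      using qe_mult[OF SF CZ _ q0, of "e ^ (d0 + 2)"] e0 by (simp add: mult.assoc)
    also have "e ^ (d0 + 2) * q = of_nat N" unfolding q_def using e0 by simp
    finally show ?thesis using qe_nat[OF SF CZ] by simp
  qed
  moreover have "qe (e ^ (d0 + 2)) * (u * u ^ d0) = qe (e ^ (Suc d0 + 1)) * u ^ Suc d0" by simp
  ultimately have "(of_nat N * u ^ d0, qe (e ^ (Suc d0 + 1)) * u ^ Suc d0) \<in> M" by simp
  moreover have "(y, of_nat N * u ^ d0) \<in> M" using Nd[of d0] LM' by blast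
  moreover have "(qe (e ^ (Suc d0 + 1)) * u ^ Suc d0, Sg e u (Suc d0)) \<in> M"
    by (rule term_leR[OF SF CZ cM LM ZO]) simp
  moreover have "(Sg e u (Suc d0), x + Sg e u (Suc d0)) \<in> M"
    using Radd[OF cM LM' ZO, of "Sg e u (Suc d0)" x] by (simp add: add.commute)
  ultimately have "(y, x + Sg e u (Suc d0)) \<in> M" using cmp_trans[OF cM] by metis
  then show False using Mbad0 by blast
qed

lemma arch: "\<exists>q\<ge>0. (a, qe q) \<in> M"
proof (cases "a = 0")
  case True then show ?thesis using cmp_refl[OF cM, of 0] qe_0[OF SF CZ] by (intro exI[of _ 0]) simp
next
  case False
  obtain N d0 where Nd: "\<And>D. D \<ge> d0 \<Longrightarrow> a \<le> of_nat N * u ^ D"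
    using bound_pow[OF SF CZ PO ZO UNI False] by blast
  obtain q0 where q0: "q0 \<ge> 0" "(u, qe q0) \<in> M" using u_bdd by blast
  have "(u ^ d0, qe q0 ^ d0) \<in> M" using cmp_pow[OF cM q0(2)] .
  then have "(of_nat N * u ^ d0, of_nat N * qe q0 ^ d0) \<in> M" by (rule cmp_mulL[OF cM])
  moreover have "of_nat N * qe q0 ^ d0 = (qe (of_nat N * q0 ^ d0) :: 'a)"
    using qe_mult[OF SF CZ _ zero_le_power[OF q0(1)], of "of_nat N" d0] qe_nat[OF SF CZ, of N]
      qe_power[OF SF CZ q0(1)] by simp
  moreover have "(a, of_nat N * u ^ d0) \<in> M" using Nd[of d0] LM' by blast
  ultimately have "(a, qe (of_nat N * q0 ^ d0)) \<in> M" using cmp_trans[OF cM] by metis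
  moreover have "of_nat N * q0 ^ d0 \<ge> 0" using q0 by simp
  ultimately show ?thesis by blast
qed

definition Phi :: "'a \<Rightarrow> real" where
  "Phi a = Inf {of_rat q | q. 0 \<le> q \<and> (a, qe q) \<in> M}"

lemma Phi_U: "0 \<le> q \<Longrightarrow> (a, qe q) \<in> M \<Longrightarrow> Phi a \<le> of_rat q"
  unfolding Phi_def
  by (rule cInf_lower) (auto intro!: bdd_belowI[of _ 0])

lemma Phi_Ug: "(\<And>q. 0 \<le> q \<Longrightarrow> (a, qe q) \<in> M \<Longrightarrow> c \<le> of_rat q) \<Longrightarrow> c \<le> Phi a"
  unfolding Phi_def
proof (rule cInf_greatest)
  show "{of_rat q | q. 0 \<le> q \<and> (a, qe q) \<in> M} \<noteq> ({} :: real set)" using arch[of a] by blast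
qed auto

lemma Phi_nonneg: "0 \<le> Phi a"
  by (rule Phi_Ug) simp

lemma Phi_Lg: assumes h: "\<And>q. 0 \<le> q \<Longrightarrow> (qe q, a) \<in> M \<Longrightarrow> of_rat q \<le> c" shows "Phi a \<le> c"
proof (rule ccontr)
  assume "\<not> Phi a \<le> c"
  then have lt: "c < Phi a" by simp
  have "(qe 0, a) \<in> M" using M0 qe_0[OF SF CZ] by simp
  then have c0: "0 \<le> c" using h[of 0] by simp
  obtain q where q: "c < of_rat q" "of_rat q < Phi a" using of_rat_dense[OF lt] by blast
  have q0: "0 \<le> q" using q(1) c0 by (metis less_eq_real_def of_rat_less_eq of_rat_0 order_trans)
  have "(a, qe q) \<notin> M" using Phi_U[OF q0] q(2) by force
  then have "(qe q, a) \<in> M" using M_total by blast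
  then show False using h[OF q0] q(1) by simp
qed

lemma Phi_qe: "0 \<le> q \<Longrightarrow> Phi (qe q) = of_rat q"
proof (rule antisym)
  assume q0: "0 \<le> q"
  show "Phi (qe q) \<le> of_rat q" by (rule Phi_U[OF q0 cmp_refl[OF cM]])
  show "of_rat q \<le> Phi (qe q)"
  proof (rule Phi_Ug)
    fix q' assume "0 \<le> q'" "(qe q, qe q') \<in> M"
    then have "q \<le> q'" using M_qe_refl q0 by blast
    then show "of_rat q \<le> (of_rat q' :: real)" by (simp add: of_rat_less_eq)
  qed
qed

lemma Phi_monoM: "(a, b) \<in> M \<Longrightarrow> Phi a \<le> Phi b"
proof (rule Phi_Ug)
  fix q assume "(a, b) \<in> M" "0 \<le> q" "(b, qe q) \<in> M"
  then show "Phi a \<le> of_rat q" using Phi_U cmp_trans[OF cM] by blast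
qed

lemma Phi_add: "Phi (a + b) = Phi a + Phi b"
proof (rule antisym)
  have h1: "Phi (a + b) \<le> of_rat q + of_rat q'"
    if "0 \<le> q" "(a, qe q) \<in> M" "0 \<le> q'" "(b, qe q') \<in> M" for q q'
  proof -
    have "(a + b, qe q + qe q') \<in> M" using cmp_add[OF cM that(2) that(4)] .
    then have "(a + b, qe (q + q')) \<in> M" using qe_add[OF SF CZ that(1) that(3)] by simp
    then have "Phi (a + b) \<le> of_rat (q + q')" using Phi_U that by simp
    then show ?thesis by (simp add: of_rat_add)
  qed
  have h2: "Phi (a + b) - of_rat q' \<le> Phi a" if "0 \<le> q'" "(b, qe q') \<in> M" for q'
    by (rule Phi_Ug) (use h1 that in force)
  have "Phi (a + b) - Phi a \<le> Phi b"
    by (rule Phi_Ug) (use h2 in force)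
  then show "Phi (a + b) \<le> Phi a + Phi b" by simp
next
  have h1: "of_rat q + of_rat q' \<le> Phi (a + b)"
    if "0 \<le> q" "(qe q, a) \<in> M" "0 \<le> q'" "(qe q', b) \<in> M" for q q'
  proof (rule Phi_Ug)
    fix r assume r: "0 \<le> r" "(a + b, qe r) \<in> M"
    have "(qe q + qe q', a + b) \<in> M" using cmp_add[OF cM that(2) that(4)] .
    then have "(qe (q + q'), qe r) \<in> M" using qe_add[OF SF CZ that(1) that(3)] r(2) cmp_trans[OF cM] by metis
    then have "q + q' \<le> r" using M_qe_refl r(1) that by simp
    then show "of_rat q + of_rat q' \<le> (of_rat r :: real)" by (metis of_rat_add of_rat_less_eq)
  qed
  have h2: "Phi a \<le> Phi (a + b) - of_rat q'" if "0 \<le> q'" "(qe q', b) \<in> M" for q'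
    by (rule Phi_Lg) (use h1 that in force)
  have "Phi b \<le> Phi (a + b) - Phi a"
    by (rule Phi_Lg) (use h2 in force)
  then show "Phi a + Phi b \<le> Phi (a + b)" by simp
qed

lemma Phi_mult: "Phi (a * b) = Phi a * Phi b"
proof (rule antisym)
  have h1: "Phi (a * b) \<le> of_rat q * of_rat q'"
    if "0 \<le> q" "(a, qe q) \<in> M" "0 \<le> q'" "(b, qe q') \<in> M" for q q'
  proof -
    have "(a * b, qe q * qe q') \<in> M" using cmp_mul[OF cM that(2) that(4)] .
    then have "(a * b, qe (q * q')) \<in> M" using qe_mult[OF SF CZ that(1) that(3)] by simp
    then have "Phi (a * b) \<le> of_rat (q * q')" using Phi_U that by (simp add: mult_nonneg_nonneg)
    then show ?thesis by (simp add: of_rat_mult)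
  qed
  have h2: "Phi (a * b) \<le> Phi a * of_rat q'" if q': "0 \<le> q'" "(b, qe q') \<in> M" for q'
  proof (cases "q' = 0")
    case True
    obtain q where "0 \<le> q" "(a, qe q) \<in> M" using arch by blast
    then show ?thesis using h1[OF _ _ q'] True by simp
  next
    case False
    then have qp: "(0::real) < of_rat q'" using q' by simp
    have "Phi (a * b) / of_rat q' \<le> Phi a"
    proof (rule Phi_Ug)
      fix q assume "0 \<le> q" "(a, qe q) \<in> M"
      then have "Phi (a * b) \<le> of_rat q * of_rat q'" using h1 q' by blast
      then show "Phi (a * b) / of_rat q' \<le> of_rat q" using qp by (simp add: divide_le_eq)
    qed
    then show ?thesis using qp by (simp add: divide_le_eq)
  qed
  show "Phi (a * b) \<le> Phi a * Phi b"
  proof (cases "Phi a = 0")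
    case True
    obtain q' where "0 \<le> q'" "(b, qe q') \<in> M" using arch by blast
    then show ?thesis using h2 True by force
  next
    case False
    then have ap: "Phi a > 0" using Phi_nonneg[of a] by simp
    have "Phi (a * b) / Phi a \<le> Phi b"
    proof (rule Phi_Ug)
      fix q' assume "0 \<le> q'" "(b, qe q') \<in> M"
      then have "Phi (a * b) \<le> Phi a * of_rat q'" using h2 by blast
      then show "Phi (a * b) / Phi a \<le> of_rat q'" using ap by (simp add: divide_le_eq mult.commute)
    qed
    then show ?thesis using ap by (simp add: divide_le_eq mult.commute)
  qed
next
  have h1: "of_rat q * of_rat q' \<le> Phi (a * b)"
    if "0 \<le> q" "(qe q, a) \<in> M" "0 \<le> q'" "(qe q', b) \<in> M" for q q'
  proof (rule Phi_Ug)
    fix r assume r: "0 \<le> r" "(a * b, qe r) \<in> M"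
    have "(qe q * qe q', a * b) \<in> M" using cmp_mul[OF cM that(2) that(4)] .
    then have "(qe (q * q'), qe r) \<in> M" using qe_mult[OF SF CZ that(1) that(3)] r(2) cmp_trans[OF cM] by metis
    then have "q * q' \<le> r" using M_qe_refl r(1) that by (simp add: mult_nonneg_nonneg)
    then show "of_rat q * of_rat q' \<le> (of_rat r :: real)" by (metis of_rat_mult of_rat_less_eq)
  qed
  have h2: "Phi a * of_rat q' \<le> Phi (a * b)" if q': "0 \<le> q'" "(qe q', b) \<in> M" for q'
  proof (cases "q' = 0")
    case True then show ?thesis using Phi_nonneg by simp
  next
    case False
    then have qp: "(0::real) < of_rat q'" using q' by simp
    have "Phi a \<le> Phi (a * b) / of_rat q'"
    proof (rule Phi_Lg)
      fix q assume "0 \<le> q" "(qe q, a) \<in> M"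
      then have "of_rat q * of_rat q' \<le> Phi (a * b)" using h1 q' by blast
      then show "of_rat q \<le> Phi (a * b) / of_rat q'" using qp by (simp add: le_divide_eq)
    qed
    then show ?thesis using qp by (simp add: le_divide_eq)
  qed
  show "Phi a * Phi b \<le> Phi (a * b)"
  proof (cases "Phi a = 0")
    case True then show ?thesis using Phi_nonneg by simp
  next
    case False
    then have ap: "Phi a > 0" using Phi_nonneg[of a] by simp
    have "Phi b \<le> Phi (a * b) / Phi a"
    proof (rule Phi_Lg)
      fix q' assume "0 \<le> q'" "(qe q', b) \<in> M"
      then have "Phi a * of_rat q' \<le> Phi (a * b)" using h2 by blast
      then show "of_rat q' \<le> Phi (a * b) / Phi a" using ap by (simp add: le_divide_eq mult.commute)
    qed
    then show ?thesis using ap by (simp add: le_divide_eq mult.commute)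
  qed
qed

lemma Phi_hom: "mono_hom_Rplus Phi"
  unfolding mono_hom_Rplus_def
proof (intro conjI allI impI)
  fix a show "0 \<le> Phi a" by (rule Phi_nonneg)
next
  fix a b show "Phi (a + b) = Phi a + Phi b" by (rule Phi_add)
next
  fix a b show "Phi (a * b) = Phi a * Phi b" by (rule Phi_mult)
next
  show "Phi 0 = 0" using Phi_qe[of 0] qe_0[OF SF CZ] by simp
next
  show "Phi 1 = 1" using Phi_qe[of 1] qe_1[OF SF CZ] by simp
next
  fix a b :: 'a assume "a \<le> b"
  then show "Phi a \<le> Phi b" using Phi_monoM LM' by blast
qed

lemma Phi_sep: "Phi x < Phi y"
proof -
  have "(x + Sg e u 0, y) \<in> M" using Mbad0[of 0] M_total by blast
  then have "Phi (x + Sg e u 0) \<le> Phi y" by (rule Phi_monoM)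
  then have "Phi x + Phi (qe e) \<le> Phi y" unfolding Sg_0 Phi_add .
  then have "Phi x + of_rat e \<le> Phi y" using Phi_qe[of e] e0 by simp
  moreover have "(0::real) < of_rat e" using e0 by simp
  ultimately show ?thesis by linarith
qed

end

end



lemma hard:
  fixes u x y :: "'a::{comm_semiring_1,preorder}"
  assumes SF: "is_semifield TYPE('a)"
    and CZ: "char_zero_sr TYPE('a)"
    and PO: "preordered_sr TYPE('a)"
    and ZO: "(0::'a) \<le> 1"
    and UNI: "poly_universal u"
    and ynz: "y \<noteq> 0"
    and H1: "\<forall>f. mono_hom_Rplus f \<longrightarrow> f x \<ge> f y"
  shows "\<forall>\<epsilon>::rat. \<epsilon> > 0 \<longrightarrow> (\<exists>m::nat. y \<le> x + (\<Sum>j\<le>m. qscale (\<epsilon> ^ (j + 1)) (u ^ j)))"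
proof (rule ccontr)
  assume "\<not> (\<forall>\<epsilon>::rat. \<epsilon> > 0 \<longrightarrow> (\<exists>m::nat. y \<le> x + (\<Sum>j\<le>m. qscale (\<epsilon> ^ (j + 1)) (u ^ j))))"
  then obtain e :: rat where e0: "e > 0" and bad0: "\<forall>m. \<not> y \<le> x + (\<Sum>j\<le>m. qscale (e ^ (j + 1)) (u ^ j))"
    by blast
  have bad: "\<forall>m. \<not> y \<le> x + Sg e u m" using bad0 unfolding Sg_def .
  have "\<exists>f. mono_hom_Rplus f \<and> f x < f y"
    using zorn_GS[OF SF CZ PO ZO UNI e0 bad]
    apply (elim bexE)
    apply (rule exI, rule conjI)
     apply (erule (1) Phi_hom[OF SF CZ PO ZO UNI e0 bad _ _ ynz])
    apply (erule (1) Phi_sep[OF SF CZ PO ZO UNI e0 bad _ _ ynz])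
    done
  then obtain f where "mono_hom_Rplus f" "f x < f y" by blast
  then show False using H1 by force
qed

theorem theorem3p1:
  fixes u x y :: "'a::{comm_semiring_1,preorder}"
  assumes "is_semifield TYPE('a)"
    and "char_zero_sr TYPE('a)"
    and "preordered_sr TYPE('a)"
    and "(0::'a) \<le> 1"
    and "poly_universal u"
    and "x \<noteq> 0" and "y \<noteq> 0"
  shows "((\<forall>f. mono_hom_Rplus f \<longrightarrow> f x \<ge> f y) \<longleftrightarrow>
          (\<forall>\<epsilon>::rat. \<epsilon> > 0 \<longrightarrow> (\<exists>m::nat. y \<le> x + (\<Sum>j\<le>m. qscale (\<epsilon> ^ (j + 1)) (u ^ j)))))
       \<and> ((\<forall>\<epsilon>::rat. \<epsilon> > 0 \<longrightarrow> (\<exists>m::nat. y \<le> x + (\<Sum>j\<le>m. qscale (\<epsilon> ^ (j + 1)) (u ^ j)))) \<longleftrightarrow>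
          (\<forall>r::real. \<forall>\<epsilon>::rat. r \<ge> 0 \<longrightarrow> \<epsilon> > 0 \<longrightarrow>
             (\<exists>p::rat poly. nonneg_qpoly p \<and> poly (map_poly of_rat p) r \<le> of_rat \<epsilon>
                \<and> y \<le> x + qpoly_eval p u)))
       \<and> ((\<forall>r::real. \<forall>\<epsilon>::rat. r \<ge> 0 \<longrightarrow> \<epsilon> > 0 \<longrightarrow>
             (\<exists>p::rat poly. nonneg_qpoly p \<and> poly (map_poly of_rat p) r \<le> of_rat \<epsilon>
                \<and> y \<le> x + qpoly_eval p u)) \<longleftrightarrow>
          (\<forall>r::real. \<forall>\<epsilon>::rat. r \<ge> 0 \<longrightarrow> \<epsilon> > 0 \<longrightarrow>
             (\<exists>p::rat poly. nonneg_qpoly p \<and> poly (map_poly of_rat p) r \<le> 1 + of_rat \<epsilon>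
                \<and> y \<le> qpoly_eval p u * x)))"
  (is "(?A \<longleftrightarrow> ?B) \<and> (?B \<longleftrightarrow> ?C) \<and> (?C \<longleftrightarrow> ?D)")
proof -
  note SF = assms(1) and CZ = assms(2) and PO = assms(3) and ZO = assms(4) and UNI = assms(5)
  have AB: "?A \<Longrightarrow> ?B" by (rule hard[OF SF CZ PO ZO UNI assms(7)])
  have BC: "?B \<Longrightarrow> ?C" by (rule d23[OF SF CZ PO ZO UNI])
  have CA: "?C \<Longrightarrow> ?A" by (rule d31[OF SF CZ PO ZO UNI])
  have BD: "?B \<Longrightarrow> ?D" by (rule d24[OF SF CZ PO ZO UNI assms(6)])
  have DA: "?D \<Longrightarrow> ?A" by (rule d41[OF SF CZ PO ZO UNI])
  show ?thesis using AB BC CA BD DA by blast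
qed


end
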